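(* Let $(A,B)$ be controllable. There is $\bar\beta\ge0$ depending only on $A,B,\mu_f,l_f,\mu_g,l_g,\bar\theta$ (in particular not on $N$) such that for every $Q\in\mathcal Q$, $R\in\mathcal R$ and $\theta$ with $\|\theta\|\le\bar\theta$, the vector $\beta^e=F(Q,R)\theta$ satisfies $\max(\bar\theta,\|\beta^e\|)\le\bar\beta$.
   Context: Fix $\mu_f,\mu_g>0$, $0<l_f,l_g<\infty$. $P^e(Q,R)$ denotes the positive definite solution of the DARE $P=Q+A^\top(P-PB(B^\top PB+R)^{-1}B^\top P)A$. $\mathcal Q=\{Q:\mu_fI_n\le Q\le l_fI_n\}$, $\mathcal R=\{R:\mu_gI_m\le R\le l_gI_m\}$. With $P^e=P^e(Q,R)$ and $K^e=(R+B^\top P^eB)^{-1}B^\top P^eA$, $F(Q,R)=(P^e)^{-1}(I-(A-BK^e)^\top)^{-1}Q$ (so that $\frac12(x-\beta^e)^\top P^e(x-\beta^e)$ is a bias function of the average-cost problem with stage cost $\frac12(x-\theta)^\top Q(x-\theta)+\frac12u^\top Ru$). *)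

theory Defs
  imports "HOL-Analysis.Analysis"
begin

(* matrix power (note: ^ on vec types is componentwise, so we define it separately) *)
primrec matpow :: "real^'n^'n \<Rightarrow> nat \<Rightarrow> real^'n^'n" where
  "matpow A 0 = mat 1"
| "matpow A (Suc k) = A ** matpow A k"

(* (A,B) controllable: the controllability matrix [B, AB, ..., A^(n-1) B] has rank n,
   i.e. its columns span R^n *)
definition controllable :: "real^'n^'n \<Rightarrow> real^'m^'n \<Rightarrow> bool" where
  "controllable A B \<longleftrightarrow>
     span (\<Union>k\<in>{..<CARD('n)}. range (\<lambda>j. column j (matpow A k ** B))) = UNIV"

definition symmetric_mat :: "real^'n^'n \<Rightarrow> bool" where
  "symmetric_mat M \<longleftrightarrow> transpose M = M"

definition pos_def :: "real^'n^'n \<Rightarrow> bool" where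
  "pos_def M \<longleftrightarrow> symmetric_mat M \<and> (\<forall>x. x \<noteq> 0 \<longrightarrow> x \<bullet> (M *v x) > 0)"

(* Loewner order on symmetric matrices: a I <= M <= b I *)
definition loewner_box :: "real \<Rightarrow> real \<Rightarrow> (real^'n^'n) set" where
  "loewner_box a b = {M. symmetric_mat M \<and>
      (\<forall>x. a * (x \<bullet> x) \<le> x \<bullet> (M *v x) \<and> x \<bullet> (M *v x) \<le> b * (x \<bullet> x))}"

(* the DARE  P = Q + A^T (P - P B (B^T P B + R)^{-1} B^T P) A *)
definition is_DARE_sol :: "real^'n^'n \<Rightarrow> real^'m^'n \<Rightarrow> real^'n^'n \<Rightarrow> real^'m^'m \<Rightarrow> real^'n^'n \<Rightarrow> bool" where
  "is_DARE_sol A B Q R P \<longleftrightarrow>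
     P = Q + transpose A ** (P - P ** B ** matrix_inv (transpose B ** P ** B + R) ** transpose B ** P) ** A"

(* P^e(Q,R): the positive definite solution of the DARE *)
definition Pe :: "real^'n^'n \<Rightarrow> real^'m^'n \<Rightarrow> real^'n^'n \<Rightarrow> real^'m^'m \<Rightarrow> real^'n^'n" where
  "Pe A B Q R = (THE P. pos_def P \<and> is_DARE_sol A B Q R P)"

definition Ke :: "real^'n^'n \<Rightarrow> real^'m^'n \<Rightarrow> real^'n^'n \<Rightarrow> real^'m^'m \<Rightarrow> real^'n^'m" where
  "Ke A B Q R = (let P = Pe A B Q R in matrix_inv (R + transpose B ** P ** B) ** transpose B ** P ** A)"

(* F(Q,R) = (P^e)^{-1} (I - (A - B K^e)^T)^{-1} Q *)
definition Fmat :: "real^'n^'n \<Rightarrow> real^'m^'n \<Rightarrow> real^'n^'n \<Rightarrow> real^'m^'m \<Rightarrow> real^'n^'n" where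
  "Fmat A B Q R = matrix_inv (Pe A B Q R) **
      matrix_inv (mat 1 - transpose (A - B ** Ke A B Q R)) ** Q"

end

theory Submission
  imports Defs
begin


definition q :: "real^'n^'n \<Rightarrow> real^'n \<Rightarrow> real" where
  "q M x = x \<bullet> (M *v x)"

lemma inner_transpose: "x \<bullet> ((M::real^'a^'b) *v y) = (transpose M *v x) \<bullet> y"
  by (simp add: dot_lmul_matrix)

declare transpose_matrix_vector[simp del]

lemma sym_inner: "symmetric_mat P \<Longrightarrow> x \<bullet> (P *v y) = (P *v x) \<bullet> y"
  by (metis inner_transpose symmetric_mat_def)

lemma sym_inner2: "symmetric_mat P \<Longrightarrow> x \<bullet> (P *v y) = y \<bullet> (P *v x)"
  by (metis sym_inner inner_commute)

lemma inv_works: "invertible M \<Longrightarrow> M ** matrix_inv M = mat 1 \<and> matrix_inv M ** M = mat 1"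
  unfolding matrix_inv_def invertible_def by (rule someI_ex)

lemma inv_vec: "invertible M \<Longrightarrow> M *v (matrix_inv M *v x) = x"
  by (simp add: inv_works matrix_vector_mul_assoc)

lemma inv_vec2: "invertible M \<Longrightarrow> matrix_inv M *v (M *v x) = x"
  by (simp add: inv_works matrix_vector_mul_assoc)

lemma sym_inv:
  assumes "symmetric_mat (S::real^'n^'n)" "invertible S"
  shows "symmetric_mat (matrix_inv S)"
proof -
  let ?Y = "matrix_inv S"
  have "transpose ?Y ** S = mat 1"
    using assms by (metis inv_works matrix_transpose_mul symmetric_mat_def transpose_mat)
  then have "transpose ?Y = ?Y"
    by (metis assms(2) inv_works matrix_mul_assoc matrix_mul_lid matrix_mul_rid)
  then show ?thesis by (simp add: symmetric_mat_def)
qed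

lemma invertible_ker:
  assumes "\<And>x. (M::real^'n^'n) *v x = 0 \<Longrightarrow> x = 0"
  shows "invertible M"
  using assms invertible_left_inverse matrix_left_invertible_ker by blast

lemma q_add: "q M (x + y) = q M x + x \<bullet> (M *v y) + y \<bullet> (M *v x) + q M y"
  by (simp add: q_def algebra_simps inner_add_left inner_add_right)

lemma q_diff: "q M (x - y) = q M x - x \<bullet> (M *v y) - y \<bullet> (M *v x) + q M y"
  by (simp add: q_def algebra_simps inner_diff_left inner_diff_right)

lemma q_scale: "q M (c *\<^sub>R x) = c^2 * q M x"
  by (simp add: q_def matrix_vector_mult_scaleR power2_eq_square)

lemma q_0[simp]: "q M 0 = 0" by (simp add: q_def)

lemma q_madd: "q (M + N) x = q M x + q N x"
  by (simp add: q_def matrix_vector_mult_add_rdistrib inner_add_right)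
lemma q_mdiff: "q (M - N) x = q M x - q N x"
  by (simp add: q_def matrix_vector_mult_diff_rdistrib inner_diff_right)



lemma transpose_add: "transpose (M + N) = transpose M + transpose (N::real^'a^'b)"
  by (simp add: transpose_def vec_eq_iff)
lemma transpose_diff: "transpose (M - N) = transpose M - transpose (N::real^'a^'b)"
  by (simp add: transpose_def vec_eq_iff)

definition Sm :: "real^'m^'n \<Rightarrow> real^'m^'m \<Rightarrow> real^'n^'n \<Rightarrow> real^'m^'m" where
  "Sm B R P = transpose B ** P ** B + R"
definition Ric :: "real^'n^'n \<Rightarrow> real^'m^'n \<Rightarrow> real^'n^'n \<Rightarrow> real^'m^'m \<Rightarrow> real^'n^'n \<Rightarrow> real^'n^'n" where
  "Ric A B Q R P = Q + transpose A ** (P - P ** B ** matrix_inv (transpose B ** P ** B + R) ** transpose B ** P) ** A"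
definition Kg :: "real^'n^'n \<Rightarrow> real^'m^'n \<Rightarrow> real^'m^'m \<Rightarrow> real^'n^'n \<Rightarrow> real^'n^'m" where
  "Kg A B R P = matrix_inv (Sm B R P) ** transpose B ** P ** A"
definition cost :: "real^'n^'n \<Rightarrow> real^'m^'n \<Rightarrow> real^'n^'n \<Rightarrow> real^'m^'m \<Rightarrow> real^'n^'n \<Rightarrow> real^'n \<Rightarrow> real^'m \<Rightarrow> real" where
  "cost A B Q R P x u = q Q x + q R u + q P (A *v x + B *v u)"

lemma DARE_Ric: "is_DARE_sol A B Q R P \<longleftrightarrow> P = Ric A B Q R P"
  by (simp add: is_DARE_sol_def Ric_def)

lemma q_BPB: "q (transpose B ** P ** B) u = q P (B *v u)"
  by (simp add: q_def matrix_vector_mul_assoc[symmetric] inner_transpose[of u "transpose B"])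

lemma Sm_sym: "symmetric_mat P \<Longrightarrow> symmetric_mat R \<Longrightarrow> symmetric_mat (Sm B R P)"
  by (simp add: symmetric_mat_def Sm_def transpose_add matrix_transpose_mul matrix_mul_assoc)

lemma Sm_q: "q (Sm B R P) u = q P (B *v u) + q R u"
  by (simp add: Sm_def q_madd q_BPB)

lemma Sm_inv:
  assumes "\<forall>x. 0 \<le> q P x" "\<forall>u. u \<noteq> 0 \<longrightarrow> 0 < q R u"
  shows "invertible (Sm B R P)"
proof (rule invertible_ker)
  fix u assume "Sm B R P *v u = 0"
  then have "q (Sm B R P) u = 0" by (simp add: q_def)
  then show "u = 0" using assms Sm_q[of B R P u]
    by (metis add_nonneg_pos less_irrefl)
qed

lemma completing_square:
  assumes sP: "symmetric_mat P" and sR: "symmetric_mat R" and iS: "invertible (Sm B R P)"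
  shows "cost A B Q R P x u = q (Ric A B Q R P) x + q (Sm B R P) (u + Kg A B R P *v x)"
proof -
  let ?S = "Sm B R P"
  define w where "w = transpose B *v (P *v (A *v x))"
  define v where "v = matrix_inv ?S *v w"
  have Kx: "Kg A B R P *v x = v"
    by (simp add: Kg_def v_def w_def matrix_vector_mul_assoc[symmetric])
  have Sv: "?S *v v = w" using iS by (simp add: v_def inv_vec)
  have sS: "symmetric_mat ?S" using sP sR by (rule Sm_sym)
  have r1: "q (Ric A B Q R P) x = q Q x + q P (A *v x) - w \<bullet> v"
  proof -
    have "q (Ric A B Q R P) x = q Q x + (A *v x) \<bullet> (P *v (A *v x)) - (A *v x) \<bullet> (P *v (B *v v))"
      unfolding Ric_def q_def v_def w_def Sm_def
      by (simp add: matrix_vector_mul_assoc[symmetric] matrix_vector_mult_add_rdistrib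
          matrix_vector_mult_diff_rdistrib inner_add_right inner_diff_right inner_transpose[of x "transpose A"])
    moreover have "(A *v x) \<bullet> (P *v (B *v v)) = w \<bullet> v"
      unfolding w_def using sP
      by (simp add: sym_inner inner_transpose[of "P *v (A *v x)" "B"])
    ultimately show ?thesis by (simp add: q_def)
  qed
  have e1: "(u + v) \<bullet> (?S *v (u + v)) = q ?S u + 2 * (u \<bullet> w) + v \<bullet> w"
  proof -
    have "v \<bullet> (?S *v u) = u \<bullet> w" using sS Sv by (simp add: sym_inner inner_commute)
    then show ?thesis
      by (simp add: q_def matrix_vector_right_distrib inner_add_left inner_add_right Sv)
  qed
  have e2: "(B *v u) \<bullet> (P *v (A *v x)) = u \<bullet> w"
    unfolding w_def by (simp add: inner_transpose[of "B *v u"] inner_transpose[of u "transpose B"])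
  have e3: "(A *v x) \<bullet> (P *v (B *v u)) = u \<bullet> w"
    using e2 sP by (metis sym_inner2)
  have "cost A B Q R P x u = q Q x + q R u + q P (A *v x) + 2 * (u \<bullet> w) + q P (B *v u)"
    unfolding cost_def using e2 e3 by (simp add: q_add)
  then show ?thesis using r1 e1 Kx Sm_q[of B R P u] by (simp add: q_def inner_commute)
qed



definition mn :: "real^'a^'b \<Rightarrow> real" where
  "mn M = (\<Sum>i\<in>UNIV. \<Sum>j\<in>UNIV. \<bar>M$i$j\<bar>)"

lemma mn_nonneg: "0 \<le> mn M"
  by (simp add: mn_def sum_nonneg)

lemma inner_mn: "\<bar>x \<bullet> ((M::real^'a^'b) *v y)\<bar> \<le> mn M * norm x * norm y"
proof -
  have eq: "x \<bullet> (M *v y) = (\<Sum>i\<in>UNIV. \<Sum>j\<in>UNIV. x$i * M$i$j * y$j)"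
    by (simp add: inner_vec_def matrix_vector_mult_def sum_distrib_left mult.assoc)
  have "\<bar>\<Sum>i\<in>UNIV. \<Sum>j\<in>UNIV. x$i * M$i$j * y$j\<bar> \<le> (\<Sum>i\<in>UNIV. \<bar>\<Sum>j\<in>UNIV. x$i * M$i$j * y$j\<bar>)"
    by (rule sum_abs)
  also have "\<dots> \<le> (\<Sum>i\<in>UNIV. \<Sum>j\<in>UNIV. \<bar>x$i * M$i$j * y$j\<bar>)"
    by (intro sum_mono sum_abs)
  also have "\<dots> \<le> (\<Sum>i\<in>UNIV. \<Sum>j\<in>UNIV. \<bar>M$i$j\<bar> * (norm x * norm y))"
  proof (intro sum_mono)
    fix i j
    have "\<bar>x$i * M$i$j * y$j\<bar> = \<bar>M$i$j\<bar> * (\<bar>x$i\<bar> * \<bar>y$j\<bar>)" by (simp add: abs_mult)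
    also have "\<dots> \<le> \<bar>M$i$j\<bar> * (norm x * norm y)"
      by (intro mult_left_mono mult_mono component_le_norm_cart) auto
    finally show "\<bar>x$i * M$i$j * y$j\<bar> \<le> \<bar>M$i$j\<bar> * (norm x * norm y)" .
  qed
  also have "\<dots> = mn M * norm x * norm y"
    by (simp add: mn_def sum_distrib_right mult.assoc)
  finally show ?thesis using eq by simp
qed

lemma norm_mn: "norm ((M::real^'a^'b) *v y) \<le> mn M * norm y"
proof (cases "M *v y = 0")
  case True then show ?thesis by (simp add: mn_nonneg)
next
  case False
  have "norm (M *v y) ^ 2 = \<bar>(M *v y) \<bullet> (M *v y)\<bar>" by (simp add: power2_norm_eq_inner)
  also have "\<dots> \<le> mn M * norm (M *v y) * norm y" by (rule inner_mn)
  finally have "norm (M *v y) * norm (M *v y) \<le> norm (M *v y) * (mn M * norm y)"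
    by (simp add: power2_eq_square mult_ac)
  then show ?thesis using False by simp
qed

lemma q_mn: "q M x \<le> mn M * (x \<bullet> x)"
  using inner_mn[of x M x] by (simp add: q_def power2_norm_eq_inner[symmetric] power2_eq_square mult.assoc)

lemma absaux: "4*z = a - b \<Longrightarrow> 0\<le>a \<Longrightarrow> 0\<le>b \<Longrightarrow> a \<le> c1 \<Longrightarrow> b \<le> c2 \<Longrightarrow> \<bar>z::real\<bar> \<le> (c1+c2)/4"
  by (auto simp: abs_le_iff)

lemma mv_neg: "(M::real^'a^'b) *v (- w) = - (M *v w)"
  by (simp add: vec_eq_iff matrix_vector_mult_def sum_negf)


lemma polar: "symmetric_mat P \<Longrightarrow> 4 * (x \<bullet> (P *v y)) = q P (x + y) - q P (x - y)"
  using q_add[of P x y] q_diff[of P x y] sym_inner2[of P x y] by simp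

lemma matpow_Suc': "matpow A (Suc k) = matpow A k ** A"
  by (induction k) (simp_all add: matrix_mul_assoc)

lemma matpow_Suc_mv: "matpow A (Suc k) *v x = matpow A k *v (A *v x)"
  by (simp only: matpow_Suc' matrix_vector_mul_assoc)

lemma column_mv: "column j M = (M::real^'a^'b) *v axis j 1"
  by (simp add: column_def matrix_vector_mult_def axis_def vec_eq_iff if_distrib cong: if_cong)

lemma entry_inner: "(M::real^'a^'b) $ i $ j = axis i 1 \<bullet> (M *v axis j 1)"
proof -
  have "axis i 1 \<bullet> v = v $ i" for v :: "real^'b" by (simp add: cart_eq_inner_axis inner_commute)
  then show ?thesis by (simp add: column_mv[symmetric] column_def)
qed

lemma q_par: "q P (x + y) + q P (x - y) = 2 * q P x + 2 * q P y"
  using q_add[of P x y] q_diff[of P x y] by simp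

lemma uniform_bound:
  assumes sym: "\<forall>P\<in>F. symmetric_mat P" and psd: "\<forall>P\<in>F. \<forall>x. 0 \<le> q P x"
    and ptw: "\<forall>x. \<exists>c. \<forall>P\<in>F. q P x \<le> c"
  shows "\<exists>C. \<forall>P\<in>(F::(real^'n^'n) set). mn P \<le> C"
proof -
  obtain c where c: "\<And>x P. P \<in> F \<Longrightarrow> q P x \<le> c x" using ptw by metis
  define C where "C = (\<Sum>i\<in>(UNIV::'n set). \<Sum>j\<in>(UNIV::'n set).
      (c (axis i 1 + axis j 1) + c (axis i 1 - axis j 1)) / 4)"
  have "mn P \<le> C" if "P \<in> F" for P
    unfolding mn_def C_def
  proof (intro sum_mono)
    fix i j :: 'n
    let ?x = "axis i (1::real)" and ?y = "axis j (1::real)"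
    have "4 * P$i$j = q P (?x + ?y) - q P (?x - ?y)"
      using polar[of P ?x ?y] sym that by (simp add: entry_inner[of P i j])
    moreover have "0 \<le> q P (?x + ?y)" "0 \<le> q P (?x - ?y)" using psd that by auto
    moreover have "q P (?x + ?y) \<le> c (?x + ?y)" "q P (?x - ?y) \<le> c (?x - ?y)" using c that by auto
    ultimately show "\<bar>P$i$j\<bar> \<le> (c (?x + ?y) + c (?x - ?y)) / 4"
      by (rule absaux)
  qed
  then show ?thesis by blast
qed



lemma subspace_range_mv: "subspace (range ((*v) (M::real^'a^'b)))"
  unfolding subspace_def
  by (auto simp: matrix_vector_right_distrib[symmetric] matrix_vector_mult_scaleR[symmetric])
    (metis matrix_vector_mult_0_right rangeI)

lemma family_bounded:
  fixes A :: "real^'n^'n" and B :: "real^'m^'n"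
  assumes ctrl: "controllable A B"
    and psd: "\<forall>P\<in>F. \<forall>x. 0 \<le> q P x"
    and pred: "\<forall>P\<in>F. \<exists>P'\<in>F. \<forall>x u. q P x \<le> a * (x \<bullet> x) + b * (u \<bullet> u) + q P' (A *v x + B *v u)"
  shows "\<exists>c. \<forall>P\<in>F. q P x \<le> c"
proof -
  define G where "G = {x. \<exists>c. \<forall>P\<in>F. q P x \<le> c}"
  have step: "x \<in> G" if h: "A *v x + B *v u \<in> G" for x u
  proof -
    obtain c where c: "\<forall>P\<in>F. q P (A *v x + B *v u) \<le> c" using h unfolding G_def by blast
    have "\<forall>P\<in>F. q P x \<le> a * (x \<bullet> x) + b * (u \<bullet> u) + c"
    proof
      fix P assume "P \<in> F"
      then obtain P' where "P' \<in> F" "\<forall>x u. q P x \<le> a * (x \<bullet> x) + b * (u \<bullet> u) + q P' (A *v x + B *v u)"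
        using pred by blast
      then show "q P x \<le> a * (x \<bullet> x) + b * (u \<bullet> u) + c" using c
        by (smt (verit, best))
    qed
    then show ?thesis by (auto simp: G_def)
  qed
  have subG: "subspace G"
    unfolding subspace_def
  proof (intro conjI ballI allI)
    show "0 \<in> G" by (auto simp: G_def intro: exI[of _ 0])
  next
    fix x y assume "x \<in> G" "y \<in> G"
    then obtain c1 c2 where c1: "\<forall>P\<in>F. q P x \<le> c1" and c2: "\<forall>P\<in>F. q P y \<le> c2" by (auto simp: G_def)
    have "\<forall>P\<in>F. q P (x + y) \<le> 2 * c1 + 2 * c2"
    proof
      fix P assume P: "P \<in> F"
      have "0 \<le> q P (x - y)" using psd P by auto
      then show "q P (x + y) \<le> 2 * c1 + 2 * c2" using q_par[of P x y] c1 c2 P by force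
    qed
    then show "x + y \<in> G" by (auto simp: G_def)
  next
    fix r :: real and x assume "x \<in> G"
    then obtain c1 where c1: "\<forall>P\<in>F. q P x \<le> c1" by (auto simp: G_def)
    have "\<forall>P\<in>F. q P (r *\<^sub>R x) \<le> r^2 * c1"
      using c1 by (simp add: q_scale mult_left_mono)
    then show "r *\<^sub>R x \<in> G" by (auto simp: G_def)
  qed
  define S where "S k = (\<Union>i\<in>{..<k}. range (\<lambda>j. column j (matpow A i ** B)))" for k
  have ind: "\<forall>x. matpow A k *v x \<in> span (S k) \<longrightarrow> x \<in> G" for k
  proof (induction k)
    case 0
    then show ?case using subG by (auto simp: S_def subspace_def)
  next
    case (Suc k)
    show ?case
    proof (intro allI impI)
      fix x assume "matpow A (Suc k) *v x \<in> span (S (Suc k))"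
      moreover have "S (Suc k) = S k \<union> range (\<lambda>j. column j (matpow A k ** B))"
        by (auto simp: S_def lessThan_Suc)
      ultimately obtain s t where st: "matpow A (Suc k) *v x = s + t" "s \<in> span (S k)"
          "t \<in> span (range (\<lambda>j. column j (matpow A k ** B)))"
        by (auto simp: span_Un)
      have "span (range (\<lambda>j. column j (matpow A k ** B))) \<subseteq> range ((*v) (matpow A k ** B))"
        by (rule span_minimal) (auto simp: column_mv subspace_range_mv)
      then obtain w where w: "t = (matpow A k ** B) *v w" using st(3) by blast
      have "matpow A k *v (A *v x + B *v (- w)) = s"
        using st(1) w by (simp only: matpow_Suc_mv matrix_vector_mul_assoc[symmetric]
            matrix_vector_right_distrib mv_neg) simp
      then have "A *v x + B *v (- w) \<in> G" using Suc.IH st(2) by auto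
      then show "x \<in> G" by (rule step)
    qed
  qed
  have "span (S CARD('n)) = UNIV" using ctrl by (simp add: controllable_def S_def)
  then have "x \<in> G" using ind[of "CARD('n)"] by auto
  then show ?thesis by (auto simp: G_def)
qed



definition good :: "real^'n^'n \<Rightarrow> real^'m^'m \<Rightarrow> bool" where
  "good P R \<longleftrightarrow> symmetric_mat P \<and> (\<forall>x. 0 \<le> q P x) \<and> symmetric_mat R \<and> (\<forall>u. u \<noteq> 0 \<longrightarrow> 0 < q R u)"

lemma good_inv: "good P R \<Longrightarrow> invertible (Sm B R P)"
  by (simp add: good_def Sm_inv)

lemma good_R_psd: "good P R \<Longrightarrow> 0 \<le> q R u"
  unfolding good_def by (cases "u = 0") (auto simp: less_imp_le)

lemma good_S_psd: "good P R \<Longrightarrow> 0 \<le> q (Sm B R P) u"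
  using good_R_psd[of P R u] by (simp add: Sm_q good_def add_nonneg_nonneg)

lemma cs: "good P R \<Longrightarrow> cost A B Q R P x u = q (Ric A B Q R P) x + q (Sm B R P) (u + Kg A B R P *v x)"
  by (rule completing_square) (auto simp: good_def good_inv)

lemma ric_le: "good P R \<Longrightarrow> q (Ric A B Q R P) x \<le> cost A B Q R P x u"
  using cs[of P R A B Q x u] good_S_psd[of P R B] by smt

lemma ric_eq: "good P R \<Longrightarrow> q (Ric A B Q R P) x = cost A B Q R P x (- (Kg A B R P *v x))"
  using cs[of P R A B Q x "- (Kg A B R P *v x)"] by simp

lemma ric_sym: "good P R \<Longrightarrow> symmetric_mat Q \<Longrightarrow> symmetric_mat (Ric A B Q R P)"
proof -
  assume g: "good P R" and sQ: "symmetric_mat Q"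
  have sP: "transpose P = P" and sY: "transpose (matrix_inv (Sm B R P)) = matrix_inv (Sm B R P)"
    using g sym_inv[OF Sm_sym good_inv[OF g]] by (auto simp: good_def symmetric_mat_def)
  show ?thesis using sQ sP sY
    unfolding symmetric_mat_def Ric_def Sm_def[symmetric]
    by (simp add: transpose_add transpose_diff matrix_transpose_mul matrix_mul_assoc)
qed

lemma cost_mono: "(\<forall>y. q P y \<le> q P' y) \<Longrightarrow> cost A B Q R P x u \<le> cost A B Q R P' x u"
  by (simp add: cost_def)

lemma ric_mono: "good P R \<Longrightarrow> good P' R \<Longrightarrow> (\<forall>y. q P y \<le> q P' y) \<Longrightarrow>
   q (Ric A B Q R P) x \<le> q (Ric A B Q R P') x"
proof -
  assume g: "good P R" "good P' R" and le: "\<forall>y. q P y \<le> q P' y"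
  show ?thesis
  using ric_le[OF g(1), of A B Q x "- (Kg A B R P' *v x)"] ric_eq[OF g(2), of A B Q x]
    cost_mono[OF le, of A B Q R x "- (Kg A B R P' *v x)"] by linarith
qed

lemma mv_Acl: "(A::real^'n^'n) *v x + (B::real^'m^'n) *v (- (K *v x)) = (A - B ** K) *v x"
  by (simp add: mv_neg matrix_vector_mult_diff_rdistrib matrix_vector_mul_assoc[symmetric])

lemma ric_ge: "good P R \<Longrightarrow> q (Ric A B Q R P) x \<ge> q Q x + q P ((A - B ** Kg A B R P) *v x)"
  using ric_eq[of P R A B Q x] good_R_psd[of P R "- (Kg A B R P *v x)"]
  by (simp add: cost_def mv_Acl)

(* box facts *)
lemma box_sym: "Q \<in> loewner_box a b \<Longrightarrow> symmetric_mat Q"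
  by (simp add: loewner_box_def)
lemma box_lo: "Q \<in> loewner_box a b \<Longrightarrow> a * (x \<bullet> x) \<le> q Q x"
  by (simp add: loewner_box_def q_def)
lemma box_hi: "Q \<in> loewner_box a b \<Longrightarrow> q Q x \<le> b * (x \<bullet> x)"
  by (simp add: loewner_box_def q_def)
lemma box_pos: "Q \<in> loewner_box a b \<Longrightarrow> 0 < a \<Longrightarrow> x \<noteq> 0 \<Longrightarrow> 0 < q Q x"
  using box_lo[of Q a b x] by (smt (verit) inner_gt_zero_iff mult_pos_pos)
lemma box_nonneg: "Q \<in> loewner_box a b \<Longrightarrow> 0 < a \<Longrightarrow> 0 \<le> q Q x"
  using box_pos[of Q a b x] by (cases "x = 0") auto

lemma posdef_good: "pos_def P \<Longrightarrow> R \<in> loewner_box a b \<Longrightarrow> 0 < a \<Longrightarrow> good P R"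
proof -
  assume P: "pos_def P" and R: "R \<in> loewner_box a b" and a: "0 < a"
  have "0 \<le> q P x" for x
    using P by (cases "x = 0") (auto simp: q_def pos_def_def less_imp_le)
  then show ?thesis using P R a box_sym[OF R] box_pos[OF R a] by (auto simp: good_def pos_def_def)
qed

(* properties of a solution *)
lemma sol_props:
  assumes P: "pos_def P" "is_DARE_sol A B Q R P" and Q: "Q \<in> loewner_box a1 b1" and R: "R \<in> loewner_box a2 b2"
    and a: "0 < a1" "0 < a2"
  shows "good P R" "\<And>x. q P x \<ge> a1 * (x \<bullet> x) + q P ((A - B ** Kg A B R P) *v x)"
    "\<And>x u. q P x \<le> b1 * (x \<bullet> x) + b2 * (u \<bullet> u) + q P (A *v x + B *v u)"
    "\<And>x. q P x \<ge> a1 * (x \<bullet> x)"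
proof -
  show g: "good P R" using P R a by (simp add: posdef_good)
  have eq: "q P x = q (Ric A B Q R P) x" for x using P by (metis DARE_Ric)
  show "q P x \<ge> a1 * (x \<bullet> x) + q P ((A - B ** Kg A B R P) *v x)" for x
    using ric_ge[OF g, where A=A and B=B and Q=Q and x=x] box_lo[OF Q, of x] eq[of x] by linarith
  then show "q P x \<ge> a1 * (x \<bullet> x)" for x using g unfolding good_def by (smt (verit))
  show "q P x \<le> b1 * (x \<bullet> x) + b2 * (u \<bullet> u) + q P (A *v x + B *v u)" for x u
    using ric_le[OF g, of A B Q x u] eq[of x] box_hi[OF Q, of x] box_hi[OF R, of u]
    by (simp add: cost_def)
qed

lemma contraction:
  assumes "\<And>x. q P x \<ge> a * (x \<bullet> x) + q P (M *v x)" "\<And>x. q P x \<le> c * (x \<bullet> x)" "0 < a" "a \<le> c"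
    "\<And>x. 0 \<le> q P x"
  shows "q P (M *v x) \<le> (1 - a / c) * q P x"
proof -
  have c: "0 < c" using assms by linarith
  have "a / c * q P x \<le> a / c * (c * (x \<bullet> x))" using assms(2) assms(3) c
    by (intro mult_left_mono) auto
  also have "\<dots> = a * (x \<bullet> x)" using c by simp
  finally show ?thesis using assms(1)[of x] by (simp add: algebra_simps)
qed

lemma geo_le0:
  assumes "\<And>k::nat. z \<le> C * r ^ k" "0 \<le> r" "r < 1"
  shows "z \<le> (0::real)"
proof -
  have "(\<lambda>k. C * r ^ k) \<longlonglongrightarrow> C * 0"
    by (intro tendsto_mult tendsto_const LIMSEQ_power_zero) (use assms in auto)
  then show ?thesis using assms(1) by (intro LIMSEQ_le_const) auto
qed

lemma quad_eq_mat:
  assumes "symmetric_mat M" "symmetric_mat N" "\<And>x. q M x = q N x"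
  shows "M = N"
proof -
  have "x \<bullet> (M *v y) = x \<bullet> (N *v y)" for x y
    using polar[OF assms(1), of x y] polar[OF assms(2), of x y] assms(3) by simp
  then have "M *v y = N *v y" for y
  proof -
    have "(M *v y - N *v y) \<bullet> (M *v y - N *v y) = 0"
      using \<open>\<And>x y. x \<bullet> (M *v y) = x \<bullet> (N *v y)\<close> by (simp add: inner_diff_right)
    then show ?thesis by simp
  qed
  then have "M $ i $ j = N $ i $ j" for i j by (metis entry_inner)
  then show ?thesis by (simp add: vec_eq_iff)
qed

lemma uniqueness:
  assumes P1: "pos_def P1" "is_DARE_sol A B Q R P1" and P2: "pos_def P2" "is_DARE_sol A B Q R P2"
    and Q: "Q \<in> loewner_box a1 b1" and R: "R \<in> loewner_box a2 b2" and a: "0 < a1" "0 < a2"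
  shows "P1 = P2"
proof -
  have le: "q P2 x \<le> q P1 x" if P1: "pos_def P1" "is_DARE_sol A B Q R P1"
    and P2: "pos_def P2" "is_DARE_sol A B Q R P2" for P1 P2 x
  proof -
    note s1 = sol_props[OF P1 Q R a] and s2 = sol_props[OF P2 Q R a]
    define M where "M = A - B ** Kg A B R P1"
    define dd where "dd y = q P2 y - q P1 y" for y
    have step: "dd y \<le> dd (M *v y)" for y
    proof -
      have "q P2 y = q (Ric A B Q R P2) y" using P2 by (metis DARE_Ric)
      also have "\<dots> \<le> cost A B Q R P2 y (- (Kg A B R P1 *v y))" by (rule ric_le[OF s2(1)])
      finally have a: "q P2 y \<le> cost A B Q R P2 y (- (Kg A B R P1 *v y))" .
      have "q P1 y = q (Ric A B Q R P1) y" using P1 by (metis DARE_Ric)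
      also have "\<dots> = cost A B Q R P1 y (- (Kg A B R P1 *v y))" by (rule ric_eq[OF s1(1)])
      finally show ?thesis using a by (simp add: dd_def cost_def mv_Acl M_def)
    qed
    define c where "c = max (mn P1) a1"
    have ca: "a1 \<le> c" "0 < c" using a by (auto simp: c_def)
    have qc: "q P1 y \<le> c * (y \<bullet> y)" for y
      using q_mn[of P1 y] by (smt (verit, best) c_def inner_ge_zero max.cobounded1 mult_right_mono)
    have nn1: "0 \<le> q P1 y" and nn2: "0 \<le> q P2 y" for y using s1(1) s2(1) by (auto simp: good_def)
    define r where "r = 1 - a1 / c"
    have r: "0 \<le> r" "r < 1" using ca a by (auto simp: r_def)
    have contr: "q P1 (M *v y) \<le> r * q P1 y" for y unfolding r_def M_def
      by (rule contraction[OF s1(2) qc a(1) ca(1) nn1])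
    have iter: "dd y \<le> dd (((*v) M ^^ k) y)" for k y
      by (induction k arbitrary: y) (auto intro: order_trans[OF step] simp del: funpow.simps simp: funpow_Suc_right)
    have decay: "q P1 (((*v) M ^^ k) y) \<le> r ^ k * q P1 y" for k y
    proof (induction k)
      case 0 then show ?case by simp
    next
      case (Suc k)
      have "q P1 (((*v) M ^^ Suc k) y) \<le> r * q P1 (((*v) M ^^ k) y)" using contr by simp
      also have "\<dots> \<le> r * (r ^ k * q P1 y)" using Suc r by (intro mult_left_mono) auto
      finally show ?case by (simp add: mult.assoc)
    qed
    have bnd: "dd x \<le> (mn P2 / a1) * q P1 x * r ^ k" for k
    proof -
      let ?y = "((*v) M ^^ k) x"
      have "dd x \<le> dd ?y" by (rule iter)
      also have "\<dots> \<le> q P2 ?y" using nn1 by (simp add: dd_def)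
      also have "\<dots> \<le> mn P2 * (?y \<bullet> ?y)" by (rule q_mn)
      also have "\<dots> \<le> mn P2 * (q P1 ?y / a1)"
        using s1(4)[of ?y] a by (intro mult_left_mono mn_nonneg) (simp add: field_simps)
      also have "\<dots> \<le> mn P2 * (r ^ k * q P1 x / a1)"
        using decay[of k x] a by (intro mult_left_mono mn_nonneg divide_right_mono) auto
      finally show ?thesis by (simp add: field_simps)
    qed
    have "dd x \<le> 0" using r by (intro geo_le0[of "dd x" "mn P2 / a1 * q P1 x" r] bnd) auto
    then show ?thesis by (simp add: dd_def)
  qed
  have "q P1 x = q P2 x" for x using le[OF P1 P2, of x] le[OF P2 P1, of x] by simp
  then show ?thesis
    using quad_eq_mat P1(1) P2(1) by (auto simp: pos_def_def)
qed



lemma inner_sum_expand: "x \<bullet> ((M::real^'a^'b) *v y) = (\<Sum>i\<in>UNIV. \<Sum>j\<in>UNIV. x$i * M$i$j * y$j)"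
  by (simp add: inner_vec_def matrix_vector_mult_def sum_distrib_left mult.assoc)

lemma existence:
  fixes A :: "real^'n^'n" and B :: "real^'m^'n"
  assumes ctrl: "controllable A B" and Q: "Q \<in> loewner_box a1 b1" and R: "R \<in> loewner_box a2 b2"
    and a: "0 < a1" "0 < a2" "0 < b1" "0 < b2"
  shows "\<exists>P. pos_def P \<and> is_DARE_sol A B Q R P"
proof -
  define Pk where "Pk k = (Ric A B Q R ^^ k) 0" for k
  have sQ: "symmetric_mat Q" using Q by (rule box_sym)
  have qQ: "0 \<le> q Q x" for x using Q a by (simp add: box_nonneg)
  have Pk_Suc: "Pk (Suc k) = Ric A B Q R (Pk k)" for k by (simp add: Pk_def)
  have good0: "good (0::real^'n^'n) R"
    using box_sym[OF R] box_pos[OF R a(2)] by (simp add: good_def symmetric_mat_def transpose_def vec_eq_iff q_def)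
  have good: "good (Pk k) R" for k
  proof (induction k)
    case 0 then show ?case using good0 by (simp add: Pk_def)
  next
    case (Suc k)
    have "0 \<le> q (Pk (Suc k)) x" for x
      using ric_ge[OF Suc, where A=A and B=B and Q=Q and x=x] qQ[of x] Suc
      by (simp add: Pk_Suc good_def) (smt (verit))
    then show ?case using Suc ric_sym[OF Suc sQ] by (simp add: good_def Pk_Suc)
  qed
  have psd: "0 \<le> q (Pk k) x" for k x using good[of k] by (simp add: good_def)
  have mono: "q (Pk k) x \<le> q (Pk (Suc k)) x" for k x
  proof (induction k arbitrary: x)
    case 0 then show ?case using psd[of 1 x] by (simp add: Pk_def q_def)
  next
    case (Suc k) then show ?case
      using ric_mono[OF good[of k] good[of "Suc k"]] by (simp add: Pk_Suc)
  qed
  have incs: "incseq (\<lambda>k. q (Pk k) x)" for x using mono by (simp add: incseq_SucI)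
  have pred: "\<forall>P\<in>range Pk. \<exists>P'\<in>range Pk. \<forall>x u. q P x \<le> b1 * (x \<bullet> x) + b2 * (u \<bullet> u) + q P' (A *v x + B *v u)"
  proof
    fix P assume "P \<in> range Pk"
    then obtain k where k: "P = Pk k" by auto
    show "\<exists>P'\<in>range Pk. \<forall>x u. q P x \<le> b1 * (x \<bullet> x) + b2 * (u \<bullet> u) + q P' (A *v x + B *v u)"
    proof (cases k)
      case 0
      have "q P x \<le> b1 * (x \<bullet> x) + b2 * (u \<bullet> u) + q P (A *v x + B *v u)" for x u
        using k 0 a by (simp add: Pk_def q_def)
      then show ?thesis using k by blast
    next
      case (Suc j)
      have "q P x \<le> b1 * (x \<bullet> x) + b2 * (u \<bullet> u) + q (Pk j) (A *v x + B *v u)" for x u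
        using k Suc ric_le[OF good[of j], of A B Q x u] box_hi[OF Q, of x] box_hi[OF R, of u]
        by (simp add: Pk_Suc cost_def)
      then show ?thesis by blast
    qed
  qed
  have bdd: "\<exists>c. \<forall>k. q (Pk k) x \<le> c" for x
    using family_bounded[OF ctrl _ pred] psd by auto
  have "\<exists>l. (\<lambda>k. q (Pk k) x) \<longlonglongrightarrow> l" for x
  proof -
    obtain c where "\<forall>k. q (Pk k) x \<le> c" using bdd by blast
    then show ?thesis using incseq_convergent[OF incs] by metis
  qed
  then obtain L where L: "\<And>x. (\<lambda>k. q (Pk k) x) \<longlonglongrightarrow> L x" by metis
  define e where "e i = (axis i 1 :: real^'n)" for i
  define P where "P = (\<chi> i j. (L (e i + e j) - L (e i - e j)) / 4)"
  have entry_lim: "(\<lambda>k. Pk k $ i $ j) \<longlonglongrightarrow> P $ i $ j" for i j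
  proof -
    have eq: "(q (Pk k) (e i + e j) - q (Pk k) (e i - e j)) / 4 = Pk k $ i $ j" for k
      using polar[of "Pk k" "e i" "e j"] good[of k] entry_inner[of "Pk k" i j]
      by (simp add: good_def e_def)
    moreover have "(\<lambda>k. (q (Pk k) (e i + e j) - q (Pk k) (e i - e j)) / 4) \<longlonglongrightarrow> P $ i $ j"
      unfolding P_def by (simp, intro tendsto_intros L) simp
    then show ?thesis unfolding eq .
  qed
  have inner_lim: "(\<lambda>k. x \<bullet> (Pk k *v y)) \<longlonglongrightarrow> x \<bullet> (P *v y)" for x y
    unfolding inner_sum_expand by (intro tendsto_intros entry_lim)
  have qlim: "(\<lambda>k. q (Pk k) x) \<longlonglongrightarrow> q P x" for x
    unfolding q_def by (rule inner_lim)
  have Pk_le: "q (Pk k) x \<le> q P x" for k x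
    by (rule incseq_le[OF incs qlim])
  have mn_lim: "(\<lambda>k. mn (P - Pk k)) \<longlonglongrightarrow> 0"
  proof -
    have "(\<lambda>k. \<Sum>i\<in>UNIV. \<Sum>j\<in>UNIV. \<bar>P$i$j - Pk k$i$j\<bar>) \<longlonglongrightarrow> (\<Sum>i\<in>(UNIV::'n set). \<Sum>j\<in>(UNIV::'n set). \<bar>P$i$j - P$i$j\<bar>)"
      by (intro tendsto_intros entry_lim)
    then show ?thesis by (simp add: mn_def)
  qed
  have qneg: "q M (- v) = q M v" for M :: "real^'n^'n" and v
    by (simp add: q_def mv_neg)
  have sP: "symmetric_mat P"
  proof -
    have "L (e j - e i) = L (e i - e j)" for i j
    proof -
      have "(\<lambda>k. q (Pk k) (e j - e i)) \<longlonglongrightarrow> L (e i - e j)"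
      proof -
        have "q (Pk k) (e j - e i) = q (Pk k) (e i - e j)" for k
          using qneg[of "Pk k" "e i - e j"] by simp
        then show ?thesis using L[of "e i - e j"] by simp
      qed
      then show ?thesis using L[of "e j - e i"] LIMSEQ_unique by blast
    qed
    then show ?thesis by (simp add: symmetric_mat_def P_def transpose_def vec_eq_iff add.commute)
  qed
  have lower: "a1 * (x \<bullet> x) \<le> q P x" for x
  proof -
    have "q (Pk 1) x \<ge> q Q x + q (Pk 0) ((A - B ** Kg A B R (Pk 0)) *v x)"
      using ric_ge[OF good[of 0], where A=A and B=B and Q=Q and x=x] by (simp add: Pk_Suc[of 0, simplified])
    then show ?thesis using Pk_le[of 1 x] psd[of 0] box_lo[OF Q, of x] by smt
  qed
  have posP: "pos_def P"
    unfolding pos_def_def using sP lower a(1)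
    by (smt (verit, best) inner_gt_zero_iff mult_pos_pos q_def)
  have goodP: "good P R" using posdef_good[OF posP R a(2)] .
  have ge: "q P x \<le> q (Ric A B Q R P) x" for x
  proof -
    have "q (Pk (Suc k)) x \<le> q (Ric A B Q R P) x" for k
      using ric_mono[OF good[of k] goodP] Pk_le by (simp add: Pk_Suc)
    then show ?thesis using LIMSEQ_le_const2[OF LIMSEQ_Suc[OF qlim[of x]]] by blast
  qed
  have le: "q (Ric A B Q R P) x \<le> q P x" for x
  proof -
    define u where "u k = - (Kg A B R (Pk k) *v x)" for k
    define z where "z k = A *v x + B *v u k" for k
    define Zn where "Zn = mn A * norm x + mn B * sqrt (q P x / a2)"
    have cst: "cost A B Q R (Pk k) x (u k) = q (Pk (Suc k)) x" for k
      using ric_eq[OF good[of k], of A B Q x] by (simp add: Pk_Suc u_def)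
    have zb: "z k \<bullet> z k \<le> Zn ^ 2" for k
    proof -
      have "a2 * (u k \<bullet> u k) \<le> q R (u k)" by (rule box_lo[OF R])
      also have "\<dots> \<le> cost A B Q R (Pk k) x (u k)" using qQ[of x] psd[of k "z k"]
        by (simp add: cost_def z_def)
      also have "\<dots> \<le> q P x" using cst Pk_le by simp
      finally have "norm (u k) ^ 2 \<le> q P x / a2" using a(2)
        by (simp add: power2_norm_eq_inner field_simps mult.commute)
      then have nu: "norm (u k) \<le> sqrt (q P x / a2)" using real_le_rsqrt by blast
      have "norm (z k) \<le> norm (A *v x) + norm (B *v u k)" by (simp add: z_def norm_triangle_ineq)
      also have "\<dots> \<le> mn A * norm x + mn B * norm (u k)" by (intro add_mono norm_mn)
      also have "\<dots> \<le> Zn" unfolding Zn_def using nu by (intro add_mono mult_left_mono mn_nonneg) auto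
      finally have "norm (z k) ^ 2 \<le> Zn ^ 2" by (intro power_mono) auto
      then show ?thesis by (simp add: power2_norm_eq_inner)
    qed
    have "q (Ric A B Q R P) x \<le> q (Pk (Suc k)) x + mn (P - Pk k) * Zn ^ 2" for k
    proof -
      have "q (Ric A B Q R P) x \<le> cost A B Q R P x (u k)" by (rule ric_le[OF goodP])
      also have "\<dots> = cost A B Q R (Pk k) x (u k) + q (P - Pk k) (z k)"
        by (simp add: cost_def q_mdiff z_def)
      also have "\<dots> \<le> q (Pk (Suc k)) x + mn (P - Pk k) * Zn ^ 2"
        using cst q_mn[of "P - Pk k" "z k"] zb[of k] mn_nonneg[of "P - Pk k"]
        by (smt (verit, best) mult_left_mono)
      finally show ?thesis .
    qed
    moreover have "(\<lambda>k. q (Pk (Suc k)) x + mn (P - Pk k) * Zn ^ 2) \<longlonglongrightarrow> q P x + 0 * Zn ^ 2"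
      by (intro tendsto_intros LIMSEQ_Suc qlim mn_lim)
    ultimately show ?thesis by (intro LIMSEQ_le_const) auto
  qed
  have "q P x = q (Ric A B Q R P) x" for x using ge[of x] le[of x] by linarith
  then have "P = Ric A B Q R P"
    by (rule quad_eq_mat[OF sP ric_sym[OF goodP sQ]])
  then show ?thesis using posP DARE_Ric by blast
qed



lemma arith_K:
  fixes Vz Vx cw Vy d s :: real
  assumes "Vz = Vx + 2*cw + Vy" "0 \<le> Vx - 2 * s * cw + s^2*Vy" "Vy \<le> (1-d)*Vz" "0 \<le> Vy" "0 \<le> Vx"
    "0<d" "d<1" "s = d/(2*(1-d))"
  shows "Vz \<le> 2*(1 + 2*(1-d)/d)/d * Vx"
proof -
  have s: "0 < s" using assms by simp
  have "2 * s * cw \<le> Vx + s^2*Vy" using assms(2) by linarith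
  then have "2*cw \<le> Vx/s + s*Vy" using s by (simp add: field_simps power2_eq_square)
  then have "Vz \<le> (1 + 1/s) * Vx + (1 + s) * Vy" using assms(1) by (simp add: algebra_simps)
  also have "(1 + s) * Vy \<le> (1 + s) * ((1-d)*Vz)" using assms(3) s by (intro mult_left_mono) auto
  finally have a: "Vz \<le> (1 + 1/s) * Vx + (1 + s) * (1-d) * Vz" by (simp add: mult.assoc)
  have e1: "(1 + s) * (1-d) = 1 - d/2" using assms(6,7,8) by (simp add: field_simps)
  have e2: "1/s = 2*(1-d)/d" using assms(6,7,8) by simp
  have a2: "Vz \<le> (1 + 2*(1-d)/d) * Vx + (1 - d/2) * Vz"
    using a unfolding e2[symmetric] e1[symmetric] by (simp add: mult.assoc)
  have "(1 - d/2) * Vz = Vz - d/2 * Vz" by algebra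
  then have "d/2 * Vz \<le> (1 + 2*(1-d)/d) * Vx" using a2 by linarith
  then have "Vz \<le> (2/d) * ((1 + 2*(1-d)/d) * Vx)" using assms(6) by (simp add: field_simps)
  then show ?thesis by (simp add: field_simps)
qed

lemma inv_bound:
  fixes P M :: "real^'n^'n"
  assumes sP: "symmetric_mat P" and psd: "\<And>x. 0 \<le> q P x"
    and dec: "\<And>x. q P x \<ge> a * (x \<bullet> x) + q P (M *v x)"
    and up: "\<And>x. q P x \<le> c * (x \<bullet> x)" and a: "0 < a" "a \<le> c"
  shows "norm z \<le> sqrt (2*(1 + 2*(1-a/(2*c))/(a/(2*c)))/(a/(2*c)) * c / a) * norm (z - M *v z)"
proof -
  define d where "d = a/(2*c)"
  define K where "K = 2*(1 + 2*(1-d)/d)/d"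
  have c: "0 < c" using a by linarith
  have d: "0 < d" "d < 1" using a c by (auto simp: d_def field_simps)
  have contr: "q P (M *v y) \<le> (1 - d) * q P y" for y
  proof -
    have "q P (M *v y) \<le> (1 - a / c) * q P y" by (rule contraction[OF dec up a psd])
    also have "\<dots> \<le> (1 - d) * q P y" using psd[of y] a c
      by (intro mult_right_mono) (auto simp: d_def field_simps)
    finally show ?thesis .
  qed
  define x where "x = z - M *v z"
  define s where "s = d/(2*(1-d))"
  have zx: "z = x + M *v z" by (simp add: x_def)
  have e1: "q P z = q P x + 2 * (x \<bullet> (P *v (M *v z))) + q P (M *v z)"
    using q_add[of P x "M *v z"] sym_inner2[OF sP, of x "M *v z"] zx by simp
  have e2: "0 \<le> q P x - 2 * s * (x \<bullet> (P *v (M *v z))) + s^2 * q P (M *v z)"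
    using q_diff[of P x "s *\<^sub>R (M *v z)"] sym_inner2[OF sP, of x "M *v z"] psd[of "x - s *\<^sub>R (M *v z)"]
    by (simp add: q_scale matrix_vector_mult_scaleR)
  have "q P z \<le> K * q P x"
    unfolding K_def by (rule arith_K[OF e1 e2 contr psd psd d s_def])
  also have "\<dots> \<le> K * (c * (x \<bullet> x))"
    using up[of x] d by (intro mult_left_mono) (auto simp: K_def)
  finally have "a * (z \<bullet> z) \<le> K * c * (x \<bullet> x)" using dec[of z] psd[of "M *v z"] by simp
  then have "norm z ^ 2 \<le> (K * c / a) * norm x ^ 2" using a
    by (simp add: power2_norm_eq_inner field_simps)
  then have "norm z \<le> sqrt ((K * c / a) * norm x ^ 2)" by (rule real_le_rsqrt)
  also have "\<dots> = sqrt (K * c / a) * norm x" by (simp only: real_sqrt_mult real_sqrt_abs abs_norm_cancel)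
  finally show ?thesis by (simp add: K_def d_def x_def mult.assoc)
qed



lemma norm_from_sq: "0 \<le> b \<Longrightarrow> norm (p::real^'n) ^ 2 \<le> b * norm p \<Longrightarrow> norm p \<le> b"
  by (cases "p = 0") (auto simp: power2_eq_square)

lemma pos_K: "0 < d \<Longrightarrow> d < 1 \<Longrightarrow> 0 < c \<Longrightarrow> 0 < (a::real) \<Longrightarrow> 0 \<le> 2*(1 + 2*(1-d)/d)/d * c / a"
  by (intro divide_nonneg_pos mult_nonneg_nonneg add_nonneg_nonneg) auto

theorem lemma8:
  fixes A :: "real^'n^'n" and B :: "real^'m^'n"
    and \<mu>f lf \<mu>g lg \<theta>bar :: real
  assumes "\<mu>f > 0" "\<mu>g > 0" "lf > 0" "lg > 0"
    and "controllable A B"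
  shows "\<exists>\<beta>bar \<ge> 0. \<forall>Q \<in> loewner_box \<mu>f lf. \<forall>R \<in> loewner_box \<mu>g lg.
           \<forall>\<theta> :: real^'n. norm \<theta> \<le> \<theta>bar \<longrightarrow>
             max \<theta>bar (norm (Fmat A B Q R *v \<theta>)) \<le> \<beta>bar"
proof -
  note a = assms(1-4) and ctrl = assms(5)
  define F where "F = {P. \<exists>Q\<in>loewner_box \<mu>f lf. \<exists>R\<in>loewner_box \<mu>g lg. pos_def P \<and> is_DARE_sol A B Q R P}"
  have Fgood: "\<exists>R::real^'m^'m. good P R" if PF0: "P \<in> F" for P
  proof -
    obtain Q R where h: "Q\<in>loewner_box \<mu>f lf" "R\<in>loewner_box \<mu>g lg" "pos_def P" "is_DARE_sol A B Q R P"
      using PF0 unfolding F_def by blast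
    show ?thesis using sol_props(1)[OF h(3,4,1,2) a(1,2)] by blast
  qed
  have Fsym: "\<forall>P\<in>F. symmetric_mat P" using Fgood by (auto simp: good_def)
  have Fpsd: "\<forall>P\<in>F. \<forall>x. 0 \<le> q P x" using Fgood by (auto simp: good_def)
  have Fpred: "\<forall>P\<in>F. \<exists>P'\<in>F. \<forall>x u. q P x \<le> lf * (x \<bullet> x) + lg * (u \<bullet> u) + q P' (A *v x + B *v u)"
  proof
    fix P assume P: "P \<in> F"
    then obtain Q R where h: "Q\<in>loewner_box \<mu>f lf" "R\<in>loewner_box \<mu>g lg" "pos_def P" "is_DARE_sol A B Q R P"
      unfolding F_def by blast
    have "\<forall>x u. q P x \<le> lf * (x \<bullet> x) + lg * (u \<bullet> u) + q P (A *v x + B *v u)"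
      using sol_props(3)[OF h(3,4,1,2) a(1,2)] by blast
    then show "\<exists>P'\<in>F. \<forall>x u. q P x \<le> lf * (x \<bullet> x) + lg * (u \<bullet> u) + q P' (A *v x + B *v u)"
      using P by blast
  qed
  have ptw: "\<forall>x. \<exists>c. \<forall>P\<in>F. q P x \<le> c"
    using family_bounded[OF ctrl Fpsd Fpred] by blast
  obtain C where C: "\<And>P. P \<in> F \<Longrightarrow> mn P \<le> C"
    using uniform_bound[OF Fsym Fpsd ptw] by blast
  have boxptw: "\<forall>x. \<exists>c. \<forall>Q\<in>loewner_box \<mu>f lf. q Q x \<le> c"
    using box_hi by blast
  obtain CQ where CQ: "\<And>Q. Q \<in> (loewner_box \<mu>f lf :: (real^'n^'n) set) \<Longrightarrow> mn Q \<le> CQ"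
    using uniform_bound[of "loewner_box \<mu>f lf :: (real^'n^'n) set"] boxptw box_sym box_nonneg[OF _ a(1)]
    by blast
  define c where "c = max C \<mu>f"
  define L where "L = sqrt (2*(1 + 2*(1-\<mu>f/(2*c))/(\<mu>f/(2*c)))/(\<mu>f/(2*c)) * c / \<mu>f)"
  define CQ' where "CQ' = max CQ 0"
  define \<beta> where "\<beta> = max \<theta>bar 0 * (1 + CQ' * L / \<mu>f)"
  have c: "\<mu>f \<le> c" "0 < c" using a by (auto simp: c_def)
  have L0: "0 \<le> L" unfolding L_def using c a(1)
    by (intro real_sqrt_ge_zero pos_K) (auto simp: field_simps)
  have CQ'0: "0 \<le> CQ'" by (simp add: CQ'_def)
  have "\<forall>Q \<in> loewner_box \<mu>f lf. \<forall>R \<in> loewner_box \<mu>g lg.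
           \<forall>\<theta> :: real^'n. norm \<theta> \<le> \<theta>bar \<longrightarrow> max \<theta>bar (norm (Fmat A B Q R *v \<theta>)) \<le> \<beta>"
  proof (intro ballI allI impI)
    fix Q :: "real^'n^'n" and R :: "real^'m^'m" and \<theta> :: "real^'n"
    assume Q: "Q \<in> loewner_box \<mu>f lf" and R: "R \<in> loewner_box \<mu>g lg" and th: "norm \<theta> \<le> \<theta>bar"
    obtain P where P: "pos_def P" "is_DARE_sol A B Q R P"
      using existence[OF ctrl Q R a(1,2,3,4)] by blast
    have Pe: "Pe A B Q R = P"
      unfolding Pe_def
    proof (rule the_equality)
      show "pos_def P \<and> is_DARE_sol A B Q R P" using P by blast
    next
      fix P' assume "pos_def P' \<and> is_DARE_sol A B Q R P'"
      then show "P' = P" using uniqueness[OF _ _ P Q R a(1,2), of P'] by blast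
    qed
    note s = sol_props[OF P Q R a(1,2)]
    have PF: "P \<in> F" using P Q R by (auto simp: F_def)
    have sP: "symmetric_mat P" and psd: "\<And>x. 0 \<le> q P x" using s(1) by (auto simp: good_def)
    have up: "q P x \<le> c * (x \<bullet> x)" for x
    proof -
      have "mn P \<le> c" using C[OF PF] by (simp add: c_def)
      then show ?thesis using q_mn[of P x] mult_right_mono[OF \<open>mn P \<le> c\<close> inner_ge_zero[of x]] by linarith
    qed
    define M where "M = A - B ** Kg A B R P"
    have Ke: "Ke A B Q R = Kg A B R P"
    proof -
      have "R + transpose B ** P ** B = Sm B R P" by (simp only: Sm_def add.commute[of R])
      then show ?thesis unfolding Ke_def Let_def Pe Kg_def by simp
    qed
    have zb: "norm z \<le> L * norm (z - M *v z)" for z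
      unfolding L_def M_def by (rule inv_bound[OF sP psd s(2) up a(1) c(1)])
    define N where "N = mat 1 - M"
    have Nv: "N *v z = z - M *v z" for z by (simp add: N_def matrix_vector_mult_diff_rdistrib)
    have invN: "invertible N"
    proof (rule invertible_ker)
      fix z assume "N *v z = 0"
      then have "norm z \<le> 0" using zb[of z] Nv[of z] by simp
      then show "z = 0" by simp
    qed
    have invNt: "invertible (transpose N)" by (rule transpose_invertible[OF invN])
    have Nt: "transpose N = mat 1 - transpose M" by (simp add: N_def transpose_diff)
    have invP: "invertible P"
    proof (rule invertible_ker)
      fix z assume "P *v z = 0"
      then have "q P z = 0" by (simp add: q_def)
      then have "\<mu>f * (z \<bullet> z) \<le> 0" using s(4)[of z] by simp
      then have "z \<bullet> z \<le> 0" using a(1) by (simp add: mult_le_0_iff)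
      then show "z = 0" using inner_gt_zero_iff[of z] by linarith
    qed
    have Feq: "Fmat A B Q R *v \<theta> = matrix_inv P *v (matrix_inv (transpose N) *v (Q *v \<theta>))"
    proof -
      have "Fmat A B Q R = matrix_inv P ** matrix_inv (transpose N) ** Q"
        by (simp only: Fmat_def Pe Ke Nt M_def)
      then show ?thesis by (simp only: matrix_vector_mul_assoc[symmetric])
    qed
    have b1: "norm (Q *v \<theta>) \<le> CQ' * norm \<theta>"
    proof -
      have "mn Q \<le> CQ'" using CQ[OF Q] by (simp add: CQ'_def)
      then show ?thesis using norm_mn[of Q \<theta>] mult_right_mono[OF \<open>mn Q \<le> CQ'\<close> norm_ge_zero[of \<theta>]] by linarith
    qed
    have b2: "norm (matrix_inv (transpose N) *v y) \<le> L * norm y" for y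
    proof -
      define y' where "y' = matrix_inv (transpose N) *v y"
      have ty: "transpose N *v y' = y" using invNt by (simp add: y'_def inv_vec)
      define w where "w = matrix_inv N *v y'"
      have Nw: "N *v w = y'" using invN by (simp add: w_def inv_vec)
      have nw: "norm w \<le> L * norm y'" using zb[of w] Nw Nv[of w] by simp
      have "norm y' ^ 2 = y' \<bullet> (N *v w)" by (simp add: Nw power2_norm_eq_inner)
      also have "\<dots> = y \<bullet> w" by (simp add: inner_transpose ty)
      also have "\<dots> \<le> norm y * norm w" by (rule norm_cauchy_schwarz)
      also have "\<dots> \<le> norm y * (L * norm y')" by (intro mult_left_mono nw) auto
      finally have "norm y' ^ 2 \<le> (L * norm y) * norm y'" by (simp add: mult_ac)
      then show ?thesis unfolding y'_def[symmetric] by (rule norm_from_sq[rotated]) (simp add: L0)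
    qed
    have b3: "norm (matrix_inv P *v v) \<le> norm v / \<mu>f" for v
    proof -
      define p where "p = matrix_inv P *v v"
      have Pp: "P *v p = v" using invP by (simp add: p_def inv_vec)
      have "\<mu>f * norm p ^ 2 \<le> q P p" using s(4)[of p] by (simp add: power2_norm_eq_inner)
      also have "\<dots> = p \<bullet> v" by (simp add: q_def Pp)
      also have "\<dots> \<le> norm p * norm v" by (rule norm_cauchy_schwarz)
      finally have "norm p ^ 2 \<le> (norm v / \<mu>f) * norm p" using a(1) by (simp add: field_simps)
      moreover have "0 \<le> norm v / \<mu>f" using a(1) by simp
      ultimately show ?thesis unfolding p_def[symmetric] by (rule norm_from_sq[rotated])
    qed
    have "norm (Fmat A B Q R *v \<theta>) \<le> norm (matrix_inv (transpose N) *v (Q *v \<theta>)) / \<mu>f"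
      unfolding Feq by (rule b3)
    also have "\<dots> \<le> L * norm (Q *v \<theta>) / \<mu>f" using b2 a(1) by (intro divide_right_mono) auto
    also have "\<dots> \<le> L * (CQ' * norm \<theta>) / \<mu>f" using b1 a(1) L0 by (intro divide_right_mono mult_left_mono) auto
    also have "\<dots> \<le> L * (CQ' * max \<theta>bar 0) / \<mu>f" using th a(1) L0 CQ'0
      by (intro divide_right_mono mult_left_mono) auto
    also have "\<dots> \<le> \<beta>" unfolding \<beta>_def using a(1) by (simp add: field_simps)
    finally have "norm (Fmat A B Q R *v \<theta>) \<le> \<beta>" .
    moreover have "\<theta>bar \<le> \<beta>"
    proof -
      have X0: "0 \<le> CQ' * L / \<mu>f" using L0 CQ'0 a(1) by simp
      have "max \<theta>bar 0 * (1 + CQ' * L / \<mu>f) = max \<theta>bar 0 + max \<theta>bar 0 * (CQ' * L / \<mu>f)"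
        by (simp add: algebra_simps)
      moreover have "0 \<le> max \<theta>bar 0 * (CQ' * L / \<mu>f)" by (rule mult_nonneg_nonneg[OF _ X0]) simp
      moreover have "\<theta>bar \<le> max \<theta>bar 0" by simp
      ultimately show ?thesis unfolding \<beta>_def by linarith
    qed
    ultimately show "max \<theta>bar (norm (Fmat A B Q R *v \<theta>)) \<le> \<beta>" by simp
  qed
  moreover have "0 \<le> \<beta>" unfolding \<beta>_def using L0 CQ'0 a(1) by (simp add: divide_nonneg_pos)
  ultimately show ?thesis by blast
qed

end
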